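(* Let $w\geqslant2$ and $h=2^d$ with $d\in\mathbb{N}$. Then $r(\mathcal{H}_{h,w})=h$, where $\mathcal{H}_{h,w}$ is the set of fast Hough transform patterns on the $h\times w$ image.
   Context: Image: the set $I$ of $wh$ pixels $p_{ij}$, $i=0,\dots,h-1$ (row, counted from the bottom), $j=0,\dots,w-1$ (column). A pattern is a nonempty subset of $I$; a pattern set is a nonempty set of distinct patterns. For a pattern set $\mathcal{T}$, its intersection area is $S(\mathcal{T})=|\mathcal{T}|\cdot\bigl|\bigcap_{T\in\mathcal{T}}T\bigr|$ and its self-intersection measure is $r(\mathcal{T})=\max_{\varnothing\neq\mathcal{R}\subseteq\mathcal{T}}S(\mathcal{R})$. FHT patterns: for a pattern $T$ containing exactly one pixel in each of its rows, let $\Delta(T)=(j_{top}-j_{bot})\bmod w$, where $j_{top},j_{bot}$ are the column indices of the topmost and bottommost pixels of $T$, and let $\mathit{tran}_{a,b}(T)=\{p_{i+a,\,(j+b)\bmod w}\mid p_{ij}\in T\}$. Define $\mathcal{H}_0=\{\{p_{00}\},\{p_{01}\},\dots,\{p_{0,w-1}\}\}$ and, for $k=1,\dots,d$, $\mathcal{H}_k=\{T\cup\mathit{tran}_{2^{k-1},\,\Delta(T)+s}(T)\mid T\in\mathcal{H}_{k-1},\ s\in\{0,1\}\}$; $\mathcal{H}_{h,w}=\mathcal{H}_d$. *)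

theory Defs
  imports Main
begin

text \<open>A pixel p_ij is the pair (i, j): i = row (counted from the bottom), j = column.\<close>
type_synonym pixel = "nat \<times> nat"

definition image :: "nat \<Rightarrow> nat \<Rightarrow> pixel set" where
  "image h w = {0..<h} \<times> {0..<w}"

definition inter_area :: "pixel set set \<Rightarrow> nat" where
  "inter_area \<T> = card \<T> * card (\<Inter>\<T>)"

definition self_inter :: "pixel set set \<Rightarrow> nat" where
  "self_inter \<T> = Max {inter_area \<R> | \<R>. \<R> \<subseteq> \<T> \<and> \<R> \<noteq> {}}"

definition col :: "pixel set \<Rightarrow> nat \<Rightarrow> nat" where
  "col T i = (THE j. (i, j) \<in> T)"

definition Delta :: "nat \<Rightarrow> pixel set \<Rightarrow> nat" where
  "Delta w T = nat ((int (col T (Max (fst ` T))) - int (col T (Min (fst ` T)))) mod int w)"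

definition tran :: "nat \<Rightarrow> nat \<Rightarrow> nat \<Rightarrow> pixel set \<Rightarrow> pixel set" where
  "tran w a b T = {(i + a, (j + b) mod w) | i j. (i, j) \<in> T}"

fun FHT :: "nat \<Rightarrow> nat \<Rightarrow> pixel set set" where
  "FHT w 0 = {{(0, j)} | j. j < w}"
| "FHT w (Suc k) = {T \<union> tran w (2 ^ k) (Delta w T + s) T | T s. T \<in> FHT w k \<and> s \<in> {0, 1}}"

end

theory Submission
  imports Defs
begin

definition line :: "nat \<Rightarrow> nat \<Rightarrow> pixel set \<Rightarrow> bool" where
  "line w k T \<longleftrightarrow> T \<subseteq> {0..<2^k} \<times> {0..<w} \<and> (\<forall>i<2^k. \<exists>j. (i,j) \<in> T)
     \<and> (\<forall>i j j'. (i,j) \<in> T \<longrightarrow> (i,j') \<in> T \<longrightarrow> j = j')"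

lemma tran_mem: "(x,y) \<in> tran w a b S \<longleftrightarrow> (\<exists>i j. (i,j) \<in> S \<and> x = i + a \<and> y = (j+b) mod w)"
  by (auto simp: tran_def)

lemma tran_mem2: "(x,y) \<in> tran w a b S \<longleftrightarrow> a \<le> x \<and> (\<exists>j. (x - a, j) \<in> S \<and> y = (j+b) mod w)"
proof
  assume "(x,y) \<in> tran w a b S"
  then obtain i j where "(i,j) \<in> S" "x = i + a" "y = (j+b) mod w" unfolding tran_mem by blast
  then show "a \<le> x \<and> (\<exists>j. (x - a, j) \<in> S \<and> y = (j+b) mod w)" by auto
next
  assume "a \<le> x \<and> (\<exists>j. (x - a, j) \<in> S \<and> y = (j+b) mod w)"
  then obtain j where "a \<le> x" "(x - a, j) \<in> S" "y = (j+b) mod w" by blast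
  then show "(x,y) \<in> tran w a b S" unfolding tran_mem
    by (intro exI[of _ "x - a"] exI[of _ j]) simp
qed

lemma tran_tran: "tran w a b (tran w a' b' T) = tran w (a' + a) (b' + b) T"
proof -
  have e: "\<And>j. ((j + b') mod w + b) mod w = (j + (b' + b)) mod w"
    by (simp add: mod_add_left_eq add.assoc)
  show ?thesis unfolding tran_def apply (auto simp: e add.assoc) by (metis e)
qed

lemma tran_Un: "tran w a b (X \<union> Y) = tran w a b X \<union> tran w a b Y"
  by (auto simp: tran_def)

lemma tran_id:
  assumes "line w k T" "b mod w = 0"
  shows "tran w 0 b T = T"
proof (rule set_eqI)
  fix p :: pixel
  obtain x y where p: "p = (x,y)" by force
  have "(i,j) \<in> T \<Longrightarrow> (j + b) mod w = j" for i j
    using assms unfolding line_def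
    by (auto simp: mod_add_right_eq[symmetric])
  then show "p \<in> tran w 0 b T \<longleftrightarrow> p \<in> T"
    unfolding p tran_mem by force
qed

lemma line_fst: "line w k T \<Longrightarrow> fst ` T = {0..<2^k}"
proof
  assume l: "line w k T"
  then show "fst ` T \<subseteq> {0..<2^k}" unfolding line_def by auto
  show "{0..<2^k} \<subseteq> fst ` T"
  proof
    fix i assume "i \<in> {0..<(2::nat)^k}"
    then obtain j where "(i,j) \<in> T" using l unfolding line_def by auto
    then show "i \<in> fst ` T" by (metis fst_conv image_eqI)
  qed
qed

lemma line_col: "line w k T \<Longrightarrow> (i,j) \<in> T \<Longrightarrow> col T i = j"
  unfolding line_def col_def by (rule the_equality) blast+

lemma line_card: "line w k T \<Longrightarrow> card T = 2^k"
proof -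
  assume l: "line w k T"
  have "inj_on fst T" using l unfolding line_def inj_on_def by auto
  then have "card (fst ` T) = card T" by (rule card_image)
  with line_fst[OF l] show ?thesis by simp
qed

lemma line_finite: "line w k T \<Longrightarrow> finite T"
  unfolding line_def by (meson finite_SigmaI finite_atLeastLessThan finite_subset)

lemma line_tran0: "w > 0 \<Longrightarrow> line w k T \<Longrightarrow> line w k (tran w 0 c T)"
  unfolding line_def tran_def by fastforce

lemma line_step:
  assumes "w > 0" "line w k T"
  shows "line w (Suc k) (T \<union> tran w (2^k) b T)"
proof -
  have A: "T \<subseteq> {0..<2^k} \<times> {0..<w}" and B: "\<forall>i<2^k. \<exists>j. (i,j) \<in> T"
    and C: "\<forall>i j j'. (i,j) \<in> T \<longrightarrow> (i,j') \<in> T \<longrightarrow> j = j'"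
    using assms(2) unfolding line_def by auto
  have 1: "T \<union> tran w (2^k) b T \<subseteq> {0..<2^Suc k} \<times> {0..<w}"
  proof
    fix p assume p: "p \<in> T \<union> tran w (2^k) b T"
    obtain i j where ij: "p = (i,j)" by force
    show "p \<in> {0..<2^Suc k} \<times> {0..<w}"
    proof (cases "p \<in> T")
      case True then show ?thesis using A by auto
    next
      case False
      then have "(i,j) \<in> tran w (2^k) b T" using p ij by simp
      then obtain j0 where "2^k \<le> i" "(i - 2^k, j0) \<in> T" "j = (j0+b) mod w"
        unfolding tran_mem2 by blast
      moreover have "i - 2^k < 2^k" using A calculation(2) by auto
      ultimately show ?thesis using ij assms(1) by simp
    qed
  qed
  have 2: "\<exists>j. (i,j) \<in> T \<union> tran w (2^k) b T" if "i < 2^Suc k" for i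
  proof (cases "i < 2^k")
    case True then show ?thesis using B by blast
  next
    case False
    then have "i - 2^k < 2^k" using that by simp
    then obtain j where jT: "(i - 2^k, j) \<in> T" using B by blast
    have "(i, (j+b) mod w) \<in> tran w (2^k) b T"
      unfolding tran_mem apply (rule exI[of _ "i - 2^k"], rule exI[of _ j]) using False jT by simp
    then show ?thesis by blast
  qed
  have 3: "j = j'" if "(i,j) \<in> T \<union> tran w (2^k) b T" "(i,j') \<in> T \<union> tran w (2^k) b T" for i j j'
  proof (cases "i < 2^k")
    case True
    then have "(i,j) \<in> T" "(i,j') \<in> T" using that by (auto simp: tran_mem2)
    then show ?thesis using C by blast
  next
    case False
    then have "(i,j) \<notin> T" "(i,j') \<notin> T" using A by auto
    then have "(i,j) \<in> tran w (2^k) b T" "(i,j') \<in> tran w (2^k) b T" using that by auto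
    then obtain j0 j1 where "(i - 2^k, j0) \<in> T" "j = (j0+b) mod w" "(i - 2^k, j1) \<in> T" "j' = (j1+b) mod w"
      unfolding tran_mem2 by blast
    then show ?thesis using C by blast
  qed
  show ?thesis unfolding line_def using 1 2 3 by blast
qed

lemma FHT_line: "w > 0 \<Longrightarrow> T \<in> FHT w k \<Longrightarrow> line w k T"
proof (induction k arbitrary: T)
  case 0
  then show ?case by (auto simp: line_def)
next
  case (Suc k)
  then show ?case using line_step by auto
qed

lemma Delta_tran:
  assumes "w > 0" "line w k T"
  shows "Delta w (tran w 0 c T) = Delta w T"
proof -
  let ?T = "tran w 0 c T"
  have l': "line w k ?T" using line_tran0 assms .
  have f: "fst ` ?T = fst ` T" using line_fst[OF l'] line_fst[OF assms(2)] by simp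
  have mx: "Max (fst ` T) = 2^k - 1" and mn: "Min (fst ` T) = 0"
    using line_fst[OF assms(2)] by (auto intro!: Max_eqI Min_eqI)
  obtain a where a: "(2^k - 1, a) \<in> T" using assms(2) unfolding line_def by force
  obtain b where b: "(0, b) \<in> T" using assms(2) unfolding line_def by force
  have a': "(2^k - 1, (a + c) mod w) \<in> ?T" using a unfolding tran_mem by auto
  have b': "(0, (b + c) mod w) \<in> ?T" using b unfolding tran_mem by auto
  have "Delta w ?T = nat ((int ((a + c) mod w) - int ((b + c) mod w)) mod int w)"
    unfolding Delta_def f mx mn using line_col[OF l' a'] line_col[OF l' b'] by simp
  also have "\<dots> = nat (((int a + int c) mod int w - (int b + int c) mod int w) mod int w)"
    by (simp add: zmod_int)
  also have "\<dots> = nat ((int a - int b) mod int w)"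
    by (simp add: mod_diff_eq)
  also have "\<dots> = Delta w T"
    unfolding Delta_def mx mn using line_col[OF assms(2) a] line_col[OF assms(2) b] by simp
  finally show ?thesis .
qed

lemma FHT_tran0: "w > 0 \<Longrightarrow> T \<in> FHT w k \<Longrightarrow> tran w 0 c T \<in> FHT w k"
proof (induction k arbitrary: T)
  case 0
  then obtain j where "T = {(0,j)}" "j < w" by auto
  then have "tran w 0 c T = {(0, (j+c) mod w)}" by (auto simp: tran_def)
  then show ?case using \<open>w > 0\<close> by auto
next
  case (Suc k)
  then obtain T0 s where P: "T = T0 \<union> tran w (2^k) (Delta w T0 + s) T0" "T0 \<in> FHT w k" "s \<in> {0,1}"
    by auto
  have l: "line w k T0" using FHT_line Suc P by blast
  let ?T' = "tran w 0 c T0"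
  have "tran w 0 c T = ?T' \<union> tran w (2^k) (Delta w ?T' + s) ?T'"
    unfolding P(1) tran_Un tran_tran Delta_tran[OF Suc.prems(1) l]
    by (simp add: ac_simps)
  moreover have "?T' \<in> FHT w k" using Suc P by blast
  ultimately show ?case using P(3) by auto
qed

definition botp :: "nat \<Rightarrow> pixel set \<Rightarrow> pixel set" where
  "botp k P = {p \<in> P. fst p < 2^k}"

definition topp :: "nat \<Rightarrow> pixel set \<Rightarrow> pixel set" where
  "topp k P = {(i,j). (i + 2^k, j) \<in> P}"

lemma card_split:
  assumes "finite X"
  shows "card X = card (botp k X) + card (topp k X)"
proof -
  let ?up = "\<lambda>(i::nat,j::nat). (i + 2^k, j)"
  have eq: "X = botp k X \<union> ?up ` topp k X"
  proof (rule set_eqI)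
    fix p :: pixel
    obtain i j where p: "p = (i,j)" by force
    show "p \<in> X \<longleftrightarrow> p \<in> botp k X \<union> ?up ` topp k X"
    proof
      assume "p \<in> X"
      show "p \<in> botp k X \<union> ?up ` topp k X"
      proof (cases "i < 2^k")
        case True then show ?thesis using \<open>p \<in> X\<close> p by (auto simp: botp_def)
      next
        case False
        then have "(i - 2^k, j) \<in> topp k X" using \<open>p \<in> X\<close> p by (auto simp: topp_def)
        moreover have "p = ?up (i - 2^k, j)" using False p by simp
        ultimately show ?thesis by blast
      qed
    next
      assume "p \<in> botp k X \<union> ?up ` topp k X"
      then show "p \<in> X" by (auto simp: botp_def topp_def)
    qed
  qed
  have fb: "finite (botp k X)" using assms by (auto simp: botp_def)
  have inj: "inj_on ?up (topp k X)" by (auto simp: inj_on_def)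
  have "topp k X \<subseteq> (\<lambda>(i,j). (i - 2^k, j)) ` X"
  proof (rule subsetI)
    fix p assume "p \<in> topp k X"
    then obtain i j where "p = (i,j)" "(i+2^k,j) \<in> X" by (cases p) (auto simp: topp_def)
    then show "p \<in> (\<lambda>(i,j). (i - 2^k, j)) ` X"
      by (intro image_eqI[of _ _ "(i+2^k,j)"]) auto
  qed
  then have ft: "finite (topp k X)" using assms finite_surj by blast
  have disj: "botp k X \<inter> ?up ` topp k X = {}" by (auto simp: botp_def)
  have "card X = card (botp k X) + card (?up ` topp k X)"
    by (subst eq) (rule card_Un_disjoint, use fb ft disj in auto)
  also have "card (?up ` topp k X) = card (topp k X)" using card_image[OF inj] .
  finally show ?thesis .
qed

lemma FHT_finite: "w > 0 \<Longrightarrow> finite (FHT w k)"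
proof -
  assume w: "w > 0"
  have "FHT w k \<subseteq> Pow ({0..<2^k} \<times> {0..<w})"
    using FHT_line[OF w] unfolding line_def by blast
  then show ?thesis by (rule finite_subset) simp
qed

lemma FHT_nonempty: "w > 0 \<Longrightarrow> \<exists>T. T \<in> FHT w k"
proof (induction k)
  case 0 then show ?case by auto
next
  case (Suc k)
  then obtain T where "T \<in> FHT w k" by blast
  then have "T \<union> tran w (2^k) (Delta w T + 0) T \<in> FHT w (Suc k)"
    unfolding FHT.simps by blast
  then show ?case by blast
qed

lemma botp_step: "line w k T \<Longrightarrow> botp k (T \<union> tran w (2^k) b T) = T"
  unfolding botp_def line_def by (auto simp: tran_mem2)

lemma topp_step: "line w k T \<Longrightarrow> topp k (T \<union> tran w (2^k) b T) = tran w 0 b T"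
proof (rule set_eqI)
  fix p :: pixel
  assume l: "line w k T"
  obtain i j where p: "p = (i,j)" by force
  have "(i + 2^k, j) \<notin> T" using l unfolding line_def by auto
  then show "p \<in> topp k (T \<union> tran w (2^k) b T) \<longleftrightarrow> p \<in> tran w 0 b T"
    unfolding p topp_def by (simp add: tran_mem2)
qed

lemma tran_inv:
  assumes "w > 0" "line w k T"
  shows "tran w 0 (w - c mod w) (tran w 0 c T) = T"
proof -
  have "(c + (w - c mod w)) mod w = 0"
  proof (cases "w = 0")
    case False
    have e: "c = w * (c div w) + c mod w" by simp
    have lt: "c mod w < w" using False by simp
    have "c + (w - c mod w) = w * (c div w) + w"
      using e lt by linarith
    then show ?thesis by simp
  qed (use assms(1) in simp)
  then show ?thesis unfolding tran_tran using tran_id[OF assms(2)] by simp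
qed

lemma card_pairs:
  assumes "finite I" "R \<subseteq> (\<Union>x\<in>I. {f x, g x})"
  shows "card R \<le> 2 * card I"
proof -
  have "card R \<le> card (\<Union>x\<in>I. {f x, g x})"
    using assms by (intro card_mono) auto
  also have "\<dots> \<le> (\<Sum>x\<in>I. card {f x, g x})" using card_UN_le[OF assms(1)] .
  also have "\<dots> \<le> (\<Sum>x\<in>I. 2)" by (intro sum_mono) (simp add: card_insert_le_m1)
  finally show ?thesis by simp
qed

lemma mod_Suc_neq:
  assumes "(w::nat) \<ge> 2" shows "x mod w \<noteq> Suc x mod w"
proof
  assume e: "x mod w = Suc x mod w"
  show False
  proof (cases "Suc (x mod w) = w")
    case True then have "Suc x mod w = 0" by (simp add: mod_Suc)
    with e True show False using assms by simp
  next
    case False then have "Suc x mod w = Suc (x mod w)" by (simp add: mod_Suc)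
    with e show False by simp
  qed
qed

lemma tran_disj1:
  assumes "w \<ge> 2" "line w k T"
  shows "tran w 0 a T \<inter> tran w 0 (a+1) T = {}"
proof (rule ccontr)
  assume "tran w 0 a T \<inter> tran w 0 (a+1) T \<noteq> {}"
  then obtain i j where "(i,j) \<in> tran w 0 a T" "(i,j) \<in> tran w 0 (a+1) T" by auto
  then obtain j0 j1 where "(i,j0) \<in> T" "j = (j0+a) mod w" "(i,j1) \<in> T" "j = (j1+(a+1)) mod w"
    unfolding tran_mem2 by auto
  moreover have "j0 = j1" using calculation assms(2) unfolding line_def by blast
  ultimately have "(j0+a) mod w = Suc (j0+a) mod w" by simp
  then show False using mod_Suc_neq[OF assms(1)] by blast
qed

lemma tran_disj01:
  assumes "w \<ge> 2" "line w k T" "s1 \<in> {0,1::nat}" "s2 \<in> {0,1::nat}" "s1 \<noteq> s2"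
  shows "tran w 0 (a+s1) T \<inter> tran w 0 (a+s2) T = {}"
proof (cases "s1 = 0")
  case True
  then have "s2 = 1" using assms(4,5) by auto
  then show ?thesis using True tran_disj1[OF assms(1,2), of a] by simp
next
  case False
  then have "s1 = 1" "s2 = 0" using assms(3,4,5) by auto
  then have "tran w 0 (a+s2) T \<inter> tran w 0 (a+s1) T = {}" using tran_disj1[OF assms(1,2), of a] by simp
  then show ?thesis by blast
qed

lemma tran_inj:
  assumes "w > 0" "line w k A" "line w k A'" "tran w 0 D A = tran w 0 D A'"
  shows "A = A'"
proof -
  have "A = tran w 0 (w - D mod w) (tran w 0 D A)" using tran_inv[OF assms(1,2), of D] by simp
  also have "\<dots> = tran w 0 (w - D mod w) (tran w 0 D A')" using assms(4) by (rule arg_cong)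
  also have "\<dots> = A'" using tran_inv[OF assms(1,3), of D] .
  finally show ?thesis .
qed

lemma tran_disj2:
  assumes "w \<ge> 2" "line w k A" "line w k A'" "tran w 0 D A = tran w 0 (D+1) A'"
  shows "A \<inter> A' = {}"
proof -
  have w: "w > 0" using assms(1) by simp
  have "tran w 0 D (tran w 0 1 A') = tran w 0 (D+1) A'" by (simp add: tran_tran add.commute)
  then have "tran w 0 D A = tran w 0 D (tran w 0 1 A')" using assms(4) by simp
  then have "A = tran w 0 1 A'" by (rule tran_inj[OF w assms(2) line_tran0[OF w assms(3)]])
  moreover have "A' = tran w 0 0 A'" using tran_id[OF assms(3)] by simp
  ultimately show ?thesis using tran_disj1[OF assms(1,3), of 0] by (metis Int_commute add_0)
qed

lemma main_bound:
  assumes "w \<ge> 2" "R \<subseteq> FHT w k"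
  shows "card R * card (\<Inter>R) \<le> 2^k"
  using assms(2)
proof (induction k arbitrary: R)
  case 0
  have w0: "w > 0" using assms(1) by simp
  have fR: "finite R" using "0.prems" FHT_finite[OF w0] finite_subset by blast
  show ?case
  proof (cases "card R \<le> 1")
    case True
    show ?thesis
    proof (cases "R = {}")
      case True then show ?thesis by simp
    next
      case False
      then have "card R = 1" using True fR by (simp add: card_gt_0_iff le_Suc_eq)
      then obtain T where RT: "R = {T}" by (rule card_1_singletonE)
      then have "line w 0 T" using "0.prems" FHT_line[OF w0] by blast
      then show ?thesis using RT line_card by simp
    qed
  next
    case False
    then obtain T1 T2 where T: "T1 \<in> R" "T2 \<in> R" "T1 \<noteq> T2"
      using fR card_le_Suc0_iff_eq by (metis One_nat_def)
    have "T1 \<in> FHT w 0" "T2 \<in> FHT w 0" using T "0.prems" by blast+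
    then obtain j1 j2 where "T1 = {(0,j1)}" "T2 = {(0,j2)}" by (simp only: FHT.simps) blast
    then have "\<Inter>R = {}" using T by auto
    then show ?thesis by simp
  qed
next
  case (Suc k)
  have w0: "w > 0" using assms(1) by simp
  show ?case
  proof (cases "R = {}")
    case True then show ?thesis by simp
  next
    case Rne: False
    define F where "F T s = T \<union> tran w (2^k) (Delta w T + s) T" for T s
    have Rform: "\<exists>T s. P = F T s \<and> T \<in> FHT w k \<and> s \<in> {0,1::nat}" if "P \<in> R" for P
      using that Suc.prems unfolding F_def by auto
    have botF: "botp k (F T s) = T" if "T \<in> FHT w k" for T s
      using botp_step FHT_line[OF w0 that] unfolding F_def by metis
    have topF: "topp k (F T s) = tran w 0 (Delta w T + s) T" if "T \<in> FHT w k" for T s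
      using topp_step FHT_line[OF w0 that] unfolding F_def by metis
    have fR: "finite R" using Suc.prems FHT_finite[OF w0] finite_subset by blast
    define B where "B = botp k ` R"
    define C where "C = topp k ` R"
    have B: "B \<subseteq> FHT w k"
    proof
      fix X assume "X \<in> B"
      then obtain P where "P \<in> R" "X = botp k P" unfolding B_def by blast
      then obtain T s where "P = F T s" "T \<in> FHT w k" using Rform by blast
      then show "X \<in> FHT w k" using \<open>X = botp k P\<close> botF by simp
    qed
    have C: "C \<subseteq> FHT w k"
    proof
      fix X assume "X \<in> C"
      then obtain P where "P \<in> R" "X = topp k P" unfolding C_def by blast
      then obtain T s where "P = F T s" "T \<in> FHT w k" using Rform by blast
      then have "X = tran w 0 (Delta w T + s) T" using \<open>X = topp k P\<close> topF by simp
      then show "X \<in> FHT w k" using FHT_tran0[OF w0 \<open>T \<in> FHT w k\<close>] by simp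
    qed
    have IB: "card B * card (\<Inter>B) \<le> 2^k" using Suc.IH[OF B] .
    have IC: "card C * card (\<Inter>C) \<le> 2^k" using Suc.IH[OF C] .
    have eB: "\<Inter>B = botp k (\<Inter>R)" unfolding B_def botp_def using Rne by auto
    have eC: "\<Inter>C = topp k (\<Inter>R)" unfolding C_def topp_def using Rne by auto
    obtain P0 where "P0 \<in> R" using Rne by blast
    then have "line w (Suc k) P0" using Suc.prems FHT_line[OF w0] by blast
    then have "finite (\<Inter>R)" using \<open>P0 \<in> R\<close> line_finite
      by (meson Inter_lower finite_subset)
    then have ci: "card (\<Inter>R) = card (\<Inter>B) + card (\<Inter>C)"
      unfolding eB eC by (rule card_split)
    have fB: "finite B" "finite C" using fR unfolding B_def C_def by auto
    have cB: "card R \<le> 2 * card B"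
    proof (rule card_pairs[OF fB(1), of R "\<lambda>T. F T 0" "\<lambda>T. F T 1"])
      show "R \<subseteq> (\<Union>T\<in>B. {F T 0, F T 1})"
      proof
        fix P assume "P \<in> R"
        then obtain T s where Ts: "P = F T s" "T \<in> FHT w k" "s \<in> {0,1::nat}" using Rform by blast
        have "botp k P = T" using Ts botF by simp
        then have "T \<in> B" using \<open>P \<in> R\<close> unfolding B_def by blast
        then show "P \<in> (\<Union>T\<in>B. {F T 0, F T 1})" using Ts by auto
      qed
    qed
    define G where "G X s = F (tran w 0 (w - (Delta w X + s) mod w) X) s" for X s
    have cC: "card R \<le> 2 * card C"
    proof (rule card_pairs[OF fB(2), of R "\<lambda>X. G X 0" "\<lambda>X. G X 1"])
      show "R \<subseteq> (\<Union>X\<in>C. {G X 0, G X 1})"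
      proof
        fix P assume "P \<in> R"
        then obtain T s where Ts: "P = F T s" "T \<in> FHT w k" "s \<in> {0,1::nat}" using Rform by blast
        have l: "line w k T" using Ts FHT_line[OF w0] by blast
        define X where "X = topp k P"
        have X: "X = tran w 0 (Delta w T + s) T" using Ts topF unfolding X_def by simp
        have "Delta w X = Delta w T" unfolding X using Delta_tran[OF w0 l] .
        then have "G X s = P" unfolding G_def X using tran_inv[OF w0 l] Ts(1) by simp
        moreover have "X \<in> C" using \<open>P \<in> R\<close> unfolding C_def X_def by blast
        ultimately show "P \<in> (\<Union>X\<in>C. {G X 0, G X 1})" using Ts(3) by force
      qed
    qed
    show ?thesis
    proof (cases "\<Inter>C = {}")
      case True
      have "card R * card (\<Inter>R) = card R * card (\<Inter>B)" using ci True by simp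
      also have "\<dots> \<le> 2 * card B * card (\<Inter>B)" using cB by (intro mult_le_mono1)
      also have "\<dots> \<le> 2 * 2^k" using IB by simp
      finally show ?thesis by simp
    next
      case Cne: False
      show ?thesis
      proof (cases "\<Inter>B = {}")
        case True
        have "card R * card (\<Inter>R) = card R * card (\<Inter>C)" using ci True by simp
        also have "\<dots> \<le> 2 * card C * card (\<Inter>C)" using cC by (intro mult_le_mono1)
        also have "\<dots> \<le> 2 * 2^k" using IC by simp
        finally show ?thesis by simp
      next
        case Bne: False
        have injB: "inj_on (botp k) R"
        proof (rule inj_onI)
          fix P1 P2 assume P: "P1 \<in> R" "P2 \<in> R" "botp k P1 = botp k P2"
          obtain T1 s1 where T1: "P1 = F T1 s1" "T1 \<in> FHT w k" "s1 \<in> {0,1::nat}" using Rform P(1) by blast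
          obtain T2 s2 where T2: "P2 = F T2 s2" "T2 \<in> FHT w k" "s2 \<in> {0,1::nat}" using Rform P(2) by blast
          have TT: "T1 = T2" using P(3) T1 T2 botF by simp
          show "P1 = P2"
          proof (rule ccontr)
            assume "P1 \<noteq> P2"
            then have "s1 \<noteq> s2" using T1 T2 TT by auto
            have l: "line w k T1" using T1 FHT_line[OF w0] by blast
            have "\<Inter>C \<subseteq> topp k P1 \<inter> topp k P2" using P unfolding C_def by blast
            also have "\<dots> = tran w 0 (Delta w T1 + s1) T1 \<inter> tran w 0 (Delta w T1 + s2) T1"
              using T1 T2 TT topF by simp
            also have "\<dots> = {}" using tran_disj01[OF assms(1) l T1(3) T2(3) \<open>s1 \<noteq> s2\<close>] .
            finally show False using Cne by blast
          qed
        qed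
        have injC: "inj_on (topp k) R"
        proof (rule inj_onI)
          fix P1 P2 assume P: "P1 \<in> R" "P2 \<in> R" "topp k P1 = topp k P2"
          obtain T1 s1 where T1: "P1 = F T1 s1" "T1 \<in> FHT w k" "s1 \<in> {0,1::nat}" using Rform P(1) by blast
          obtain T2 s2 where T2: "P2 = F T2 s2" "T2 \<in> FHT w k" "s2 \<in> {0,1::nat}" using Rform P(2) by blast
          have l1: "line w k T1" using T1 FHT_line[OF w0] by blast
          have l2: "line w k T2" using T2 FHT_line[OF w0] by blast
          have X: "tran w 0 (Delta w T1 + s1) T1 = tran w 0 (Delta w T2 + s2) T2"
            using P(3) T1 T2 topF by simp
          have "Delta w T1 = Delta w (tran w 0 (Delta w T1 + s1) T1)" using Delta_tran[OF w0 l1] by simp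
          also have "\<dots> = Delta w T2" using X Delta_tran[OF w0 l2] by simp
          finally have D: "Delta w T1 = Delta w T2" .
          show "P1 = P2"
          proof (cases "s1 = s2")
            case True
            then have "T1 = T2" using tran_inj[OF w0 l1 l2] X D by simp
            then show ?thesis using T1 T2 True by simp
          next
            case False
            have "T1 \<inter> T2 = {}"
            proof (cases "s1 = 0")
              case True
              then have "s2 = 1" using False T2(3) by auto
              then show ?thesis using tran_disj2[OF assms(1) l1 l2] X D True by simp
            next
              case False
              then have "s1 = 1" "s2 = 0" using T1(3) T2(3) \<open>s1 \<noteq> s2\<close> by auto
              then have "tran w 0 (Delta w T2) T2 = tran w 0 (Delta w T2 + 1) T1" using X D by simp
              then have "T2 \<inter> T1 = {}" by (rule tran_disj2[OF assms(1) l2 l1])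
              then show ?thesis by blast
            qed
            moreover have "\<Inter>B \<subseteq> botp k P1 \<inter> botp k P2" using P unfolding B_def by blast
            ultimately show ?thesis using Bne T1 T2 botF by simp
          qed
        qed
        have "card B = card R" unfolding B_def using card_image[OF injB] .
        moreover have "card C = card R" unfolding C_def using card_image[OF injC] .
        ultimately have "card R * card (\<Inter>R) = card B * card (\<Inter>B) + card C * card (\<Inter>C)"
          using ci by (simp add: algebra_simps)
        then show ?thesis using IB IC by simp
      qed
    qed
  qed
qed

theorem lemma1:
  fixes w h d :: nat
  assumes "w \<ge> 2" and "h = 2 ^ d"
  shows "self_inter (FHT w d) = h"
proof -
  have w: "w > 0" using assms(1) by simp
  let ?H = "FHT w d"
  let ?S = "{inter_area \<R> | \<R>. \<R> \<subseteq> ?H \<and> \<R> \<noteq> {}}"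
  have "?S \<subseteq> inter_area ` Pow ?H" by auto
  then have fS: "finite ?S" using FHT_finite[OF w] by (meson finite_Pow_iff finite_imageI finite_subset)
  have le: "y \<le> 2^d" if "y \<in> ?S" for y
    using that main_bound[OF assms(1)] unfolding inter_area_def by auto
  obtain T where T: "T \<in> ?H" using FHT_nonempty[OF w] by blast
  have "inter_area {T} = 2^d"
    unfolding inter_area_def using line_card FHT_line[OF w T] by simp
  then have "2^d \<in> ?S" using T by (metis (mono_tags, lifting) empty_not_insert empty_subsetI insert_subset mem_Collect_eq)
  then have "Max ?S = 2^d" using fS le by (intro Max_eqI) auto
  then show ?thesis unfolding self_inter_def assms(2) .
qed

end
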